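(* Let $A$ be a selfadjoint operator on a separable infinite-dimensional Hilbert space $\mathcal{H}$, and let $\mathcal{L}=(\mathcal{L}_n)$ be either an $A$-regular Galerkin sequence or, if $A\ge0$, an $A^{1/2}$-regular Galerkin sequence. Let $\lambda\in\mathbb{R}$, let $\mathcal{V}\subset\operatorname{D}(A)$ be a subspace of dimension $d>0$ with orthogonal projection $\pi_{\mathcal{V}}$, and let $\varepsilon>0$ be such that $\|\pi_{\mathcal{V}}(A-\lambda)x\|\le\varepsilon\|x\|$ for all $x\in\mathcal{V}$. Then there exist $N>0$ and subspaces $\mathcal{W}_n\subset\mathcal{L}_n$ of dimension $d$ such that, for all $n\ge N$, \[ \|\pi_{\mathcal{W}_n}(A-\lambda)y\|\le2\varepsilon\sqrt{d}\,\|y\|\qquad\forall y\in\mathcal{W}_n, \] where $\pi_{\mathcal{W}_n}$ is the orthogonal projection onto $\mathcal{W}_n$.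
   Context: A sequence $\mathcal{L}=(\mathcal{L}_n)$ of finite-dimensional subspaces $\mathcal{L}_n\subset\operatorname{D}(A)$ is $A$-regular if for every $f\in\operatorname{D}(A)$ there exist $f_n\in\mathcal{L}_n$ with $\|f_n-f\|+\|Af_n-Af\|\to0$. If $A\ge0$, finite-dimensional $\mathcal{L}_n\subset\operatorname{D}(A^{1/2})$ form an $A^{1/2}$-regular sequence if every $f\in\operatorname{D}(A^{1/2})$ is the limit of some $f_n\in\mathcal{L}_n$ in the norm $\|\cdot\|+\|A^{1/2}\cdot\|$; in that case, for a finite-dimensional subspace $\mathcal{W}\subset\operatorname{D}(A^{1/2})$ and $y\in\mathcal{W}$, $\pi_{\mathcal{W}}(A-\lambda)y$ is understood in the form sense, i.e. as the element $z\in\mathcal{W}$ with $\langle w,z\rangle=\langle A^{1/2}w,A^{1/2}y\rangle-\lambda\langle w,y\rangle$ for all $w\in\mathcal{W}$. *)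

theory Defs
  imports "HOL-Analysis.Analysis"
begin

text \<open>A complex Hilbert space is modelled on a Banach type 'a (norm/topology from the
type class) together with an explicit complex scalar multiplication sc and an
inner product ip, linear in the second and conjugate-linear in the first argument,
whose induced norm is the norm of the type.\<close>

definition complex_hilbert ::
  "(complex \<Rightarrow> 'a::banach \<Rightarrow> 'a) \<Rightarrow> ('a \<Rightarrow> 'a \<Rightarrow> complex) \<Rightarrow> bool" where
  "complex_hilbert sc ip \<longleftrightarrow>
     Vector_Spaces.vector_space sc \<and>
     (\<forall>r x. sc (complex_of_real r) x = r *\<^sub>R x) \<and>
     (\<forall>x y z. ip x (y + z) = ip x y + ip x z) \<and>
     (\<forall>c x y. ip x (sc c y) = c * ip x y) \<and>
     (\<forall>x y. ip y x = cnj (ip x y)) \<and>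
     (\<forall>x. norm x = sqrt (Re (ip x x)))"

definition separable_space :: "'a::topological_space itself \<Rightarrow> bool" where
  "separable_space _ \<longleftrightarrow> (\<exists>C::'a set. countable C \<and> closure C = UNIV)"

definition infinite_dimensional :: "(complex \<Rightarrow> 'a::ab_group_add \<Rightarrow> 'a) \<Rightarrow> bool" where
  "infinite_dimensional sc \<longleftrightarrow> \<not> (\<exists>B. finite B \<and> module.span sc B = UNIV)"

definition fd_subspace :: "(complex \<Rightarrow> 'a::ab_group_add \<Rightarrow> 'a) \<Rightarrow> 'a set \<Rightarrow> bool" where
  "fd_subspace sc W \<longleftrightarrow> module.subspace sc W \<and> (\<exists>B. finite B \<and> module.span sc B = W)"

text \<open>Selfadjoint (possibly unbounded) operator with domain D, acting as A on D:
densely defined, linear, symmetric, and D(A^*) is contained in D(A).\<close>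
definition selfadjoint ::
  "(complex \<Rightarrow> 'a::banach \<Rightarrow> 'a) \<Rightarrow> ('a \<Rightarrow> 'a \<Rightarrow> complex) \<Rightarrow> 'a set \<Rightarrow> ('a \<Rightarrow> 'a) \<Rightarrow> bool" where
  "selfadjoint sc ip D A \<longleftrightarrow>
     module.subspace sc D \<and> closure D = UNIV \<and>
     (\<forall>x\<in>D. \<forall>y\<in>D. A (x + y) = A x + A y) \<and>
     (\<forall>c. \<forall>x\<in>D. A (sc c x) = sc c (A x)) \<and>
     (\<forall>x\<in>D. \<forall>y\<in>D. ip (A x) y = ip x (A y)) \<and>
     (\<forall>y z. (\<forall>x\<in>D. ip (A x) y = ip x z) \<longrightarrow> y \<in> D)"

definition nonneg_op :: "('a \<Rightarrow> 'a \<Rightarrow> complex) \<Rightarrow> 'a set \<Rightarrow> ('a \<Rightarrow> 'a) \<Rightarrow> bool" where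
  "nonneg_op ip D A \<longleftrightarrow> (\<forall>x\<in>D. 0 \<le> Re (ip x (A x)))"

definition is_sqrt_op ::
  "(complex \<Rightarrow> 'a::banach \<Rightarrow> 'a) \<Rightarrow> ('a \<Rightarrow> 'a \<Rightarrow> complex) \<Rightarrow> 'a set \<Rightarrow> ('a \<Rightarrow> 'a)
     \<Rightarrow> 'a set \<Rightarrow> ('a \<Rightarrow> 'a) \<Rightarrow> bool" where
  "is_sqrt_op sc ip D A DS S \<longleftrightarrow>
     selfadjoint sc ip DS S \<and> nonneg_op ip DS S \<and>
     D = {x \<in> DS. S x \<in> DS} \<and> (\<forall>x\<in>D. S (S x) = A x)"

definition regular_seq ::
  "(complex \<Rightarrow> 'a::banach \<Rightarrow> 'a) \<Rightarrow> 'a set \<Rightarrow> ('a \<Rightarrow> 'a) \<Rightarrow> (nat \<Rightarrow> 'a set) \<Rightarrow> bool" where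
  "regular_seq sc D T L \<longleftrightarrow>
     (\<forall>n. fd_subspace sc (L n) \<and> L n \<subseteq> D) \<and>
     (\<forall>f\<in>D. \<exists>g. (\<forall>n. g n \<in> L n) \<and>
        (\<lambda>n. norm (g n - f) + norm (T (g n) - T f)) \<longlonglongrightarrow> 0)"

definition orth_proj :: "('a::ab_group_add \<Rightarrow> 'a \<Rightarrow> complex) \<Rightarrow> 'a set \<Rightarrow> 'a \<Rightarrow> 'a" where
  "orth_proj ip W x = (THE p. p \<in> W \<and> (\<forall>u\<in>W. ip u (x - p) = 0))"

text \<open>pi_W (A - lam) y in the form sense, with A^(1/2) given by S:
the z in W with ip w z = ip (S w) (S y) - lam * ip w y for all w in W.\<close>
definition form_proj ::
  "('a::ab_group_add \<Rightarrow> 'a \<Rightarrow> complex) \<Rightarrow> ('a \<Rightarrow> 'a) \<Rightarrow> real \<Rightarrow> 'a set \<Rightarrow> 'a \<Rightarrow> 'a" where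
  "form_proj ip S lam W y =
     (THE z. z \<in> W \<and> (\<forall>w\<in>W. ip w z = ip (S w) (S y) - complex_of_real lam * ip w y))"

end

theory Submission imports Defs begin

locale hil =
  fixes sc :: "complex \<Rightarrow> 'a::banach \<Rightarrow> 'a" and ip :: "'a \<Rightarrow> 'a \<Rightarrow> complex"
  assumes H: "complex_hilbert sc ip"

sublocale hil \<subseteq> vector_space sc
  using H by (simp add: complex_hilbert_def)

context hil begin

lemma HH: "(\<forall>r x. sc (complex_of_real r) x = r *\<^sub>R x) \<and>
     (\<forall>x y z. ip x (y + z) = ip x y + ip x z) \<and>
     (\<forall>c x y. ip x (sc c y) = c * ip x y) \<and>
     (\<forall>x y. ip y x = cnj (ip x y)) \<and>
     (\<forall>x. norm x = sqrt (Re (ip x x)))"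
  using H unfolding complex_hilbert_def by blast
lemma scR: "r *\<^sub>R x = sc (complex_of_real r) x"
proof -
  have "\<forall>r x. sc (complex_of_real r) x = r *\<^sub>R x" using HH by blast
  then show ?thesis by simp
qed
lemma ip_add_right: "ip x (y + z) = ip x y + ip x z" using HH by blast
lemma ip_scale_right: "ip x (sc c y) = c * ip x y" using HH by blast
lemma ip_sym: "ip y x = cnj (ip x y)" using HH by blast
lemma norm_ip: "norm x = sqrt (Re (ip x x))" using HH by blast

lemma ip_add_left: "ip (x + y) z = ip x z + ip y z"
proof -
  have "ip (x + y) z = cnj (ip z (x + y))" by (rule ip_sym)
  also have "\<dots> = cnj (ip z x) + cnj (ip z y)" by (simp add: ip_add_right)
  also have "\<dots> = ip x z + ip y z" by (simp only: ip_sym[where y=x and x=z, symmetric] ip_sym[where y=y and x=z, symmetric])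
  finally show ?thesis .
qed
lemma ip_scale_left: "ip (sc c x) y = cnj c * ip x y"
proof -
  have "ip (sc c x) y = cnj (ip y (sc c x))" by (rule ip_sym)
  also have "\<dots> = cnj c * cnj (ip y x)" by (simp add: ip_scale_right)
  also have "\<dots> = cnj c * ip x y" by (simp only: ip_sym[where y=x and x=y, symmetric])
  finally show ?thesis .
qed
lemma ip_zero_right[simp]: "ip x 0 = 0"
  using ip_add_right[of x 0 0] by simp
lemma ip_zero_left[simp]: "ip 0 x = 0"
  using ip_add_left[of 0 0 x] by simp
lemma ip_minus_right: "ip x (- y) = - ip x y"
proof -
  have "ip x y + ip x (- y) = 0" using ip_add_right[of x y "-y"] by simp
  then show ?thesis by (simp add: add_eq_0_iff)
qed
lemma ip_minus_left: "ip (- x) y = - ip x y"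
proof -
  have "ip x y + ip (- x) y = 0" using ip_add_left[of x "-x" y] by simp
  then show ?thesis by (simp add: add_eq_0_iff)
qed
lemma ip_diff_right: "ip x (y - z) = ip x y - ip x z"
  using ip_add_right[of x y "-z"] ip_minus_right[of x z] by simp
lemma ip_diff_left: "ip (x - y) z = ip x z - ip y z"
  using ip_add_left[of x "-y" z] ip_minus_left[of y z] by simp

lemma ip_sum_right: "ip x (sum g A) = (\<Sum>i\<in>A. ip x (g i))"
  by (induction A rule: infinite_finite_induct) (auto simp: ip_add_right)
lemma ip_sum_left: "ip (sum g A) x = (\<Sum>i\<in>A. ip (g i) x)"
  by (induction A rule: infinite_finite_induct) (auto simp: ip_add_left)

lemma ip_self_real: "ip x x = complex_of_real (Re (ip x x))"
proof -
  have e: "ip x x = cnj (ip x x)" by (rule ip_sym)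
  have "Im (ip x x) = Im (cnj (ip x x))" by (subst e, rule refl)
  then have "Im (ip x x) = 0" by simp
  then show ?thesis by (simp add: complex_eq_iff)
qed

lemma Re_ip_nonneg: "Re (ip x x) \<ge> 0"
proof (rule ccontr)
  assume "\<not> ?thesis"
  then have "sqrt (Re (ip x x)) < 0" by simp
  then have "norm x < 0" using norm_ip[of x] by simp
  then show False by simp
qed

lemma ip_self: "ip x x = complex_of_real ((norm x)^2)"
proof -
  have "(norm x)^2 = Re (ip x x)" using norm_ip[of x] Re_ip_nonneg[of x] by simp
  then show ?thesis using ip_self_real[of x] by simp
qed

lemma ip_self_eq0: "ip x x = 0 \<longleftrightarrow> x = 0"
  by (simp add: ip_self)

lemma mult_cnj_self: "c * cnj c = complex_of_real ((cmod c)^2)"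
  using complex_norm_square[of c] by simp
lemma cnj_mult_self: "cnj c * c = complex_of_real ((cmod c)^2)"
  using mult_cnj_self[of c] by (simp only: mult.commute)

lemma norm_sc: "norm (sc c x) = cmod c * norm x"
proof -
  have "complex_of_real ((norm (sc c x))^2) = ip (sc c x) (sc c x)" by (rule ip_self[symmetric])
  also have "\<dots> = (cnj c * c) * ip x x" by (simp add: ip_scale_left ip_scale_right mult.assoc)
  also have "\<dots> = complex_of_real ((cmod c * norm x)^2)"
    by (simp only: cnj_mult_self ip_self of_real_mult[symmetric] power_mult_distrib)
  finally have "(norm (sc c x))^2 = (cmod c * norm x)^2" by (simp only: of_real_eq_iff)
  then show ?thesis by (simp add: power2_eq_iff_nonneg)
qed

lemma cauchy_schwarz: "cmod (ip x y) \<le> norm x * norm y"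
proof (cases "x = 0")
  case True then show ?thesis by simp
next
  case False
  define a where "a = ip x y"
  define n where "n = (norm x)^2"
  have n: "n > 0" using False by (simp add: n_def)
  define t where "t = a / complex_of_real n"
  have cy: "ip y x = cnj a" unfolding a_def by (rule ip_sym)
  have cx: "ip x x = complex_of_real n" unfolding n_def by (rule ip_self)
  have "complex_of_real ((norm (y - sc t x))^2) = ip (y - sc t x) (y - sc t x)" by (rule ip_self[symmetric])
  also have "\<dots> = ip y y - t * ip y x - cnj t * ip x y + (cnj t * t) * ip x x"
    by (simp add: ip_diff_left ip_diff_right ip_scale_left ip_scale_right algebra_simps)
  also have "\<dots> = ip y y - t * cnj a - cnj t * a + (cnj t * t) * complex_of_real n"
    by (simp only: cy cx a_def)
  also have "\<dots> = complex_of_real ((norm y)^2 - (cmod a)^2 / n)"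
  proof -
    have "t * cnj a = (a * cnj a) / complex_of_real n" by (simp add: t_def)
    also have "\<dots> = complex_of_real ((cmod a)^2) / complex_of_real n" by (simp only: mult_cnj_self)
    finally have 1: "t * cnj a = complex_of_real ((cmod a)^2 / n)" by simp
    have "cnj t * a = (cnj a * a) / complex_of_real n" by (simp add: t_def)
    also have "\<dots> = complex_of_real ((cmod a)^2) / complex_of_real n" by (simp only: cnj_mult_self)
    finally have 2: "cnj t * a = complex_of_real ((cmod a)^2 / n)" by simp
    have "(cnj t * t) * complex_of_real n = complex_of_real ((cmod t)^2 * n)" by (simp only: cnj_mult_self of_real_mult)
    also have "(cmod t)^2 * n = (cmod a)^2 / n" using n by (simp add: t_def norm_divide power_divide power2_eq_square)
    finally have 3: "(cnj t * t) * complex_of_real n = complex_of_real ((cmod a)^2 / n)" .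
    show ?thesis unfolding 1 2 3 ip_self by (simp only: diff_add_cancel of_real_diff)
  qed
  finally have "(norm (y - sc t x))^2 = (norm y)^2 - (cmod a)^2 / n" by (simp only: of_real_eq_iff)
  then have "0 \<le> (norm y)^2 - (cmod a)^2 / n" using zero_le_power2[of "norm (y - sc t x)"] by linarith
  then have "(cmod a)^2 \<le> (norm x * norm y)^2" using n by (simp add: field_simps n_def power_mult_distrib)
  then show ?thesis unfolding a_def by (meson norm_ge_zero mult_nonneg_nonneg power2_le_imp_le)
qed

lemma orth_span: "(\<And>v. v \<in> S \<Longrightarrow> ip v r = 0) \<Longrightarrow> w \<in> span S \<Longrightarrow> ip w r = 0"
proof -
  assume h: "\<And>v. v \<in> S \<Longrightarrow> ip v r = 0" and w: "w \<in> span S"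
  have "subspace {w. ip w r = 0}"
    by (auto simp: subspace_def ip_add_left ip_scale_left)
  from span_induct[OF w this] h show ?thesis by auto
qed

definition orthonormal :: "'a list \<Rightarrow> bool" where
  "orthonormal es \<longleftrightarrow> (\<forall>i<length es. \<forall>j<length es. ip (es!i) (es!j) = (if i = j then 1 else 0))"

lemma coeff_sum:
  fixes m :: nat
  assumes "\<forall>i<m. \<forall>j<m. ip (e i) (e j) = (if i = j then 1 else 0)" "j < m"
  shows "ip (e j) (\<Sum>k<m. sc (b k) (e k)) = b j"
proof -
  have "ip (e j) (\<Sum>k<m. sc (b k) (e k)) = (\<Sum>k<m. b k * (if j = k then 1 else 0))"
    using assms(1) \<open>j<m\<close> by (simp add: ip_sum_right ip_scale_right)
  also have "\<dots> = (\<Sum>k<m. if j = k then b k else 0)" by (rule sum.cong) auto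
  also have "\<dots> = b j" using \<open>j<m\<close> by (simp add: sum.delta)
  finally show ?thesis .
qed

lemma ortho_expand:
  fixes m :: nat
  assumes on: "\<forall>i<m. \<forall>j<m. ip (e i) (e j) = (if i = j then 1 else 0)"
    and u: "u \<in> span (e ` {..<m})"
  shows "u = (\<Sum>k<m. sc (ip (e k) u) (e k))"
proof -
  define r where "r = u - (\<Sum>k<m. sc (ip (e k) u) (e k))"
  have r0: "ip v r = 0" if "v \<in> e ` {..<m}" for v
    using that coeff_sum[OF on] by (auto simp: r_def ip_diff_right)
  have "r \<in> span (e ` {..<m})"
    unfolding r_def by (intro span_diff u span_sum span_scale span_base) auto
  from orth_span[OF r0 this] have "ip r r = 0" by blast
  then show ?thesis by (simp add: ip_self_eq0 r_def)
qed

lemma span_image_repr: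
  assumes "finite I" "y \<in> span (g ` I)"
  shows "\<exists>c. y = (\<Sum>i\<in>I. sc (c i) (g i))"
proof -
  define T where "T = {y. \<exists>c. y = (\<Sum>i\<in>I. sc (c i) (g i))}"
  have "subspace T"
    unfolding subspace_def T_def
  proof safe
    show "\<exists>c. 0 = (\<Sum>i\<in>I. sc (c i) (g i))" by (rule exI[of _ "\<lambda>_. 0"]) simp
    fix c1 c2
    show "\<exists>c. (\<Sum>i\<in>I. sc (c1 i) (g i)) + (\<Sum>i\<in>I. sc (c2 i) (g i)) = (\<Sum>i\<in>I. sc (c i) (g i))"
      by (rule exI[of _ "\<lambda>i. c1 i + c2 i"]) (simp add: scale_left_distrib sum.distrib)
    fix a
    show "\<exists>c. sc a (\<Sum>i\<in>I. sc (c1 i) (g i)) = (\<Sum>i\<in>I. sc (c i) (g i))"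
      by (rule exI[of _ "\<lambda>i. a * c1 i"]) (simp add: scale_sum_right)
  qed
  moreover have "g ` I \<subseteq> T"
  proof
    fix v assume "v \<in> g ` I"
    then obtain j where j: "j \<in> I" "v = g j" by auto
    have "(\<Sum>i\<in>I. sc (if i = j then 1 else 0) (g i)) = (\<Sum>i\<in>I. if i = j then g i else 0)"
      by (rule sum.cong) auto
    also have "\<dots> = v" using j assms(1) by (simp add: sum.delta')
    finally have vv: "v = (\<Sum>i\<in>I. sc ((\<lambda>i. if i = j then 1 else 0) i) (g i))" by simp
    show "v \<in> T" unfolding T_def mem_Collect_eq
      by (rule exI[of _ "\<lambda>i. if i = j then 1 else 0"]) (rule vv)
  qed
  ultimately show ?thesis using span_minimal assms(2) T_def by blast
qed


lemma lin_sum: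
  fixes \<phi> :: "'a \<Rightarrow> complex"
  assumes W: "subspace W"
    and add: "\<forall>x\<in>W. \<forall>y\<in>W. \<phi> (x + y) = \<phi> x + \<phi> y"
    and hom: "\<forall>c. \<forall>x\<in>W. \<phi> (sc c x) = \<kappa> c * \<phi> x"
    and v: "\<forall>i\<in>I. v i \<in> W" and fin: "finite I"
  shows "\<phi> (\<Sum>i\<in>I. sc (c i) (v i)) = (\<Sum>i\<in>I. \<kappa> (c i) * \<phi> (v i))"
  using fin v
proof (induction I rule: finite_induct)
  case empty
  have "\<phi> (0 + 0) = \<phi> 0 + \<phi> 0" using add subspace_0[OF W] by blast
  then have "\<phi> 0 = 0" by simp
  then show ?case by simp
next
  case (insert i I)
  have s: "(\<Sum>i\<in>I. sc (c i) (v i)) \<in> W"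
    using insert.prems by (intro subspace_sum[OF W] subspace_scale[OF W]) auto
  have "v i \<in> W" using insert.prems by auto
  then show ?case using insert s add hom subspace_scale[OF W] by simp
qed

lemma set_nth_image: "set es = (!) es ` {..<length es}"
  by (auto simp: in_set_conv_nth)

lemma gram_schmidt: "\<exists>es. orthonormal es \<and> span (set es) = span (set vs)"
proof (induction vs rule: rev_induct)
  case Nil
  show ?case by (rule exI[of _ "[]"]) (simp add: orthonormal_def)
next
  case (snoc v vs)
  then obtain es where on: "orthonormal es" and sp: "span (set es) = span (set vs)" by blast
  define m where "m = length es"
  define e where "e = (!) es"
  have on': "\<forall>i<m. \<forall>j<m. ip (e i) (e j) = (if i = j then 1 else 0)"
    using on by (simp add: orthonormal_def e_def m_def)
  have se: "set es = e ` {..<m}" by (simp add: e_def m_def set_nth_image)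
  define s where "s = (\<Sum>k<m. sc (ip (e k) v) (e k))"
  have s_sp: "s \<in> span (set vs)"
    unfolding s_def sp[symmetric] se by (intro span_sum span_scale span_base) auto
  define w where "w = v - s"
  show ?case
  proof (cases "w = 0")
    case True
    then have "v \<in> span (set vs)" using s_sp by (simp add: w_def)
    then have "span (set (vs @ [v])) = span (set vs)" by (simp add: span_redundant)
    then show ?thesis using on sp by auto
  next
    case False
    define e' where "e' = sc (complex_of_real (1 / norm w)) w"
    have nw: "norm w > 0" using False by simp
    have orth: "ip (e j) w = 0" if "j < m" for j
      using coeff_sum[OF on' that, of "\<lambda>k. ip (e k) v"] by (simp add: w_def s_def ip_diff_right)
    have orth': "ip (e j) e' = 0" if "j < m" for j
      using orth[OF that] by (simp add: e'_def ip_scale_right)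
    have orth'': "ip e' (e j) = 0" if "j < m" for j
      using orth'[OF that] ip_sym[of "e j" e'] by simp
    have "ip e' e' = cnj (complex_of_real (1 / norm w)) * (complex_of_real (1 / norm w) * ip w w)"
      unfolding e'_def by (simp only: ip_scale_left ip_scale_right mult.left_commute)
    also have "\<dots> = 1" using nw by (simp add: ip_self power2_eq_square)
    finally have ee: "ip e' e' = 1" .
    have "orthonormal (es @ [e'])"
      unfolding orthonormal_def
    proof (intro allI impI)
      fix i j assume i: "i < length (es @ [e'])" and j: "j < length (es @ [e'])"
      show "ip ((es @ [e']) ! i) ((es @ [e']) ! j) = (if i = j then 1 else 0)"
        using i j on' orth' orth'' ee
        by (cases "i < m"; cases "j < m") (auto simp: nth_append e_def m_def less_Suc_eq)
    qed
    moreover have "span (set (es @ [e'])) = span (set (vs @ [v]))"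
    proof -
      have 1: "set (es @ [e']) = insert e' (set es)" by simp
      have 2: "set (vs @ [v]) = insert v (set vs)" by simp
      have a: "span (set vs) \<subseteq> span (insert v (set vs))" by (rule span_mono) auto
      have b: "span (set es) \<subseteq> span (insert e' (set es))" by (rule span_mono) auto
      have "e' \<in> span (insert v (set vs))"
        unfolding e'_def w_def
        by (rule span_scale, rule span_diff, rule span_base, simp) (use s_sp a in blast)
      moreover have "set es \<subseteq> span (insert v (set vs))" using a sp span_superset by blast
      moreover have "v \<in> span (insert e' (set es))"
      proof -
        have veq: "v = sc (complex_of_real (norm w)) e' + s"
          using nw by (simp add: e'_def w_def)
        have "s \<in> span (insert e' (set es))" using s_sp sp b by blast
        moreover have "sc (complex_of_real (norm w)) e' \<in> span (insert e' (set es))"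
          by (rule span_scale, rule span_base, simp)
        ultimately show ?thesis unfolding veq by (simp add: span_add)
      qed
      moreover have "set vs \<subseteq> span (insert e' (set es))" using b sp span_superset by blast
      ultimately show ?thesis unfolding 1 2 span_eq by auto
    qed
    ultimately show ?thesis by blast
  qed
qed

lemma riesz:
  assumes fin: "finite B"
    and add: "\<forall>x\<in>span B. \<forall>y\<in>span B. \<phi> (x + y) = \<phi> x + \<phi> y"
    and hom: "\<forall>c. \<forall>x\<in>span B. \<phi> (sc c x) = cnj c * \<phi> x"
  shows "\<exists>!z. z \<in> span B \<and> (\<forall>w\<in>span B. ip w z = \<phi> w)"
proof -
  obtain vs where vs: "set vs = B" using finite_list[OF fin] by blast
  obtain es where on: "orthonormal es" and sp: "span (set es) = span B"
    using gram_schmidt[of vs] vs by blast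
  define m where "m = length es"
  define e where "e = (!) es"
  have on': "\<forall>i<m. \<forall>j<m. ip (e i) (e j) = (if i = j then 1 else 0)"
    using on by (simp add: orthonormal_def e_def m_def)
  have se: "span B = span (e ` {..<m})" by (simp add: e_def m_def set_nth_image sp[symmetric])
  have eW: "\<forall>k\<in>{..<m}. e k \<in> span B" unfolding se by (auto intro: span_base)
  define z where "z = (\<Sum>k<m. sc (\<phi> (e k)) (e k))"
  have zW: "z \<in> span B" unfolding z_def using eW by (intro span_sum span_scale) auto
  have zp: "ip w z = \<phi> w" if w: "w \<in> span B" for w
  proof -
    have we: "w = (\<Sum>k<m. sc (ip (e k) w) (e k))" using ortho_expand[OF on'] w se by blast
    have "\<phi> w = (\<Sum>k<m. cnj (ip (e k) w) * \<phi> (e k))"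
      by (subst we, rule lin_sum[OF subspace_span add hom eW]) simp
    moreover have "ip w z = (\<Sum>k<m. cnj (ip (e k) w) * ip (e k) z)"
      by (subst we, simp add: ip_sum_left ip_scale_left)
    moreover have "ip (e k) z = \<phi> (e k)" if "k < m" for k
      unfolding z_def using coeff_sum[OF on' that] .
    ultimately show ?thesis by simp
  qed
  show ?thesis
  proof (rule ex1I[of _ z])
    show "z \<in> span B \<and> (\<forall>w\<in>span B. ip w z = \<phi> w)" using zW zp by blast
    fix y assume y: "y \<in> span B \<and> (\<forall>w\<in>span B. ip w y = \<phi> w)"
    have d: "y - z \<in> span B" using y zW by (simp add: span_diff)
    have "ip (y - z) (y - z) = 0"
      using y zp[OF d] d by (simp add: ip_diff_right)
    then show "y = z" by (simp add: ip_self_eq0)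
  qed
qed


lemma norm_on: "ip v v = 1 \<Longrightarrow> norm v = 1"
proof -
  assume "ip v v = 1"
  then have "complex_of_real ((norm v)^2) = 1" by (simp only: ip_self)
  then have "(norm v)^2 = 1" by (simp only: of_real_eq_1_iff)
  then show "norm v = 1" using norm_ge_zero[of v] by (simp add: power2_eq_1_iff)
qed

lemma coeff_bound:
  fixes d :: nat
  assumes on: "\<forall>i<d. \<forall>j<d. ip (e i) (e j) = (if i = j then 1 else 0)" and i: "i < d"
  shows "cmod (b i) \<le> norm (\<Sum>k<d. sc (b k) (e k))"
proof -
  have "b i = ip (e i) (\<Sum>k<d. sc (b k) (e k))" using coeff_sum[OF on i] by simp
  also have "cmod \<dots> \<le> norm (e i) * norm (\<Sum>k<d. sc (b k) (e k))" by (rule cauchy_schwarz)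
  also have "norm (e i) = 1" using on i by (intro norm_on) auto
  finally show ?thesis by simp
qed

lemma lowerb:
  fixes d :: nat
  assumes on: "\<forall>i<d. \<forall>j<d. ip (e i) (e j) = (if i = j then 1 else 0)"
  shows "norm (\<Sum>i<d. sc (b i) (e i)) - (\<Sum>i<d. norm (g i - e i)) * norm (\<Sum>i<d. sc (b i) (e i))
          \<le> norm (\<Sum>i<d. sc (b i) (g i))"
proof -
  define u where "u = (\<Sum>i<d. sc (b i) (e i))"
  define z where "z = (\<Sum>i<d. sc (b i) (g i))"
  have "z - u = (\<Sum>i<d. sc (b i) (g i - e i))"
    by (simp add: z_def u_def scale_right_diff_distrib sum_subtractf)
  then have "norm (z - u) \<le> (\<Sum>i<d. norm (sc (b i) (g i - e i)))" by (simp add: norm_sum)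
  also have "\<dots> = (\<Sum>i<d. cmod (b i) * norm (g i - e i))" by (simp add: norm_sc)
  also have "\<dots> \<le> (\<Sum>i<d. norm u * norm (g i - e i))"
    by (intro sum_mono mult_right_mono) (auto simp: u_def coeff_bound[OF on])
  also have "\<dots> = (\<Sum>i<d. norm (g i - e i)) * norm u" by (simp add: sum_distrib_left mult.commute)
  finally have "norm (z - u) \<le> (\<Sum>i<d. norm (g i - e i)) * norm u" .
  moreover have "norm u \<le> norm z + norm (z - u)" using norm_triangle_sub[of u z] norm_minus_commute[of u z] by simp
  ultimately show ?thesis unfolding u_def[symmetric] z_def[symmetric] by linarith
qed

lemma sesq_err:
  fixes d :: nat
  assumes Dm: "subspace Dm"
   and add1: "\<forall>x\<in>Dm. \<forall>y\<in>Dm. \<forall>z\<in>Dm. \<Phi> (x+y) z = \<Phi> x z + \<Phi> y z"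
   and add2: "\<forall>x\<in>Dm. \<forall>y\<in>Dm. \<forall>z\<in>Dm. \<Phi> z (x+y) = \<Phi> z x + \<Phi> z y"
   and hom1: "\<forall>c. \<forall>x\<in>Dm. \<forall>y\<in>Dm. \<Phi> (sc c x) y = cnj c * \<Phi> x y"
   and hom2: "\<forall>c. \<forall>x\<in>Dm. \<forall>y\<in>Dm. \<Phi> x (sc c y) = c * \<Phi> x y"
   and eD: "\<forall>i<d. e i \<in> Dm" and gD: "\<forall>i<d. g i \<in> Dm"
   and on: "\<forall>i<d. \<forall>j<d. ip (e i) (e j) = (if i = j then 1 else 0)"
  shows "cmod (\<Phi> (\<Sum>i<d. sc (b i) (g i)) (\<Sum>i<d. sc (c i) (g i)) - \<Phi> (\<Sum>i<d. sc (b i) (e i)) (\<Sum>i<d. sc (c i) (e i)))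
     \<le> (\<Sum>i<d. \<Sum>j<d. cmod (\<Phi> (g i) (g j) - \<Phi> (e i) (e j))) * norm (\<Sum>i<d. sc (b i) (e i)) * norm (\<Sum>i<d. sc (c i) (e i))"
proof -
  have expand: "\<Phi> (\<Sum>i<d. sc (b i) (h i)) (\<Sum>i<d. sc (c i) (h i)) = (\<Sum>i<d. \<Sum>j<d. cnj (b i) * c j * \<Phi> (h i) (h j))"
    if hD: "\<forall>i<d. h i \<in> Dm" for h
  proof -
    have Y: "(\<Sum>i<d. sc (c i) (h i)) \<in> Dm" using hD by (intro subspace_sum[OF Dm] subspace_scale[OF Dm]) auto
    have "\<Phi> (\<Sum>i<d. sc (b i) (h i)) (\<Sum>i<d. sc (c i) (h i)) = (\<Sum>i<d. cnj (b i) * \<Phi> (h i) (\<Sum>j<d. sc (c j) (h j)))"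
      by (rule lin_sum[OF Dm, where \<phi> = "\<lambda>x. \<Phi> x (\<Sum>i<d. sc (c i) (h i))"]) (use add1 hom1 Y hD in auto)
    also have "\<dots> = (\<Sum>i<d. cnj (b i) * (\<Sum>j<d. c j * \<Phi> (h i) (h j)))"
      by (intro sum.cong refl arg_cong2[where f = "(*)"] lin_sum[OF Dm, where \<kappa> = "\<lambda>c. c"]) (use add2 hom2 hD in auto)
    finally show ?thesis by (simp add: sum_distrib_left mult.assoc)
  qed
  define u where "u = (\<Sum>i<d. sc (b i) (e i))"
  define x where "x = (\<Sum>i<d. sc (c i) (e i))"
  have "\<Phi> (\<Sum>i<d. sc (b i) (g i)) (\<Sum>i<d. sc (c i) (g i)) - \<Phi> u x
     = (\<Sum>i<d. \<Sum>j<d. cnj (b i) * c j * (\<Phi> (g i) (g j) - \<Phi> (e i) (e j)))"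
    unfolding u_def x_def expand[OF gD] expand[OF eD]
    by (simp add: sum_subtractf right_diff_distrib)
  then have "cmod (\<Phi> (\<Sum>i<d. sc (b i) (g i)) (\<Sum>i<d. sc (c i) (g i)) - \<Phi> u x)
      = cmod (\<Sum>i<d. \<Sum>j<d. cnj (b i) * c j * (\<Phi> (g i) (g j) - \<Phi> (e i) (e j)))"
    by (simp only:)
  also have "\<dots> \<le> (\<Sum>i<d. \<Sum>j<d. cmod (cnj (b i) * c j * (\<Phi> (g i) (g j) - \<Phi> (e i) (e j))))"
    by (rule order.trans[OF norm_sum sum_mono[OF norm_sum]])
  also have "\<dots> \<le> (\<Sum>i<d. \<Sum>j<d. norm u * norm x * cmod (\<Phi> (g i) (g j) - \<Phi> (e i) (e j)))"
    unfolding norm_mult complex_mod_cnj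
    by (intro sum_mono mult_right_mono mult_mono) (auto simp: u_def x_def coeff_bound[OF on])
  also have "\<dots> = norm u * norm x * (\<Sum>i<d. \<Sum>j<d. cmod (\<Phi> (g i) (g j) - \<Phi> (e i) (e j)))"
    by (simp only: sum_distrib_left)
  also have "\<dots> = (\<Sum>i<d. \<Sum>j<d. cmod (\<Phi> (g i) (g j) - \<Phi> (e i) (e j))) * norm u * norm x"
    by (simp only: ac_simps)
  finally show ?thesis unfolding u_def x_def .
qed


lemma core:
  fixes d :: nat
  assumes Dm: "subspace Dm"
   and add1: "\<forall>x\<in>Dm. \<forall>y\<in>Dm. \<forall>z\<in>Dm. \<Phi> (x+y) z = \<Phi> x z + \<Phi> y z"
   and add2: "\<forall>x\<in>Dm. \<forall>y\<in>Dm. \<forall>z\<in>Dm. \<Phi> z (x+y) = \<Phi> z x + \<Phi> z y"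
   and hom1: "\<forall>c. \<forall>x\<in>Dm. \<forall>y\<in>Dm. \<Phi> (sc c x) y = cnj c * \<Phi> x y"
   and hom2: "\<forall>c. \<forall>x\<in>Dm. \<forall>y\<in>Dm. \<Phi> x (sc c y) = c * \<Phi> x y"
   and eD: "\<forall>i<d. e i \<in> Dm"
   and on: "\<forall>i<d. \<forall>j<d. ip (e i) (e j) = (if i = j then 1 else 0)"
   and bnd: "\<forall>u\<in>span (e ` {..<d}). \<forall>x\<in>span (e ` {..<d}). cmod (\<Phi> u x) \<le> \<epsilon> * norm u * norm x"
   and fD: "\<forall>n. \<forall>j<d. f n j \<in> Dm"
   and fc: "\<forall>j<d. (\<lambda>n. f n j) \<longlonglongrightarrow> e j"
   and \<Phi>c: "\<forall>i<d. \<forall>j<d. (\<lambda>n. \<Phi> (f n i) (f n j)) \<longlonglongrightarrow> \<Phi> (e i) (e j)"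
   and eps: "\<epsilon> > 0"
  shows "\<exists>N. \<forall>n\<ge>N. inj_on (f n) {..<d} \<and> independent (f n ` {..<d}) \<and>
     (\<forall>y\<in>span (f n ` {..<d}). \<exists>!z. z \<in> span (f n ` {..<d}) \<and> (\<forall>w\<in>span (f n ` {..<d}). ip w z = \<Phi> w y)) \<and>
     (\<forall>y\<in>span (f n ` {..<d}). \<forall>z\<in>span (f n ` {..<d}).
        (\<forall>w\<in>span (f n ` {..<d}). ip w z = \<Phi> w y) \<longrightarrow> norm z \<le> 2 * \<epsilon> * norm y)"
proof -
  define \<sigma> where "\<sigma> n = (\<Sum>i<d. norm (f n i - e i))" for n
  define \<delta> where "\<delta> n = (\<Sum>i<d. \<Sum>j<d. cmod (\<Phi> (f n i) (f n j) - \<Phi> (e i) (e j)))" for n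
  have "\<sigma> \<longlonglongrightarrow> 0" unfolding \<sigma>_def
    by (intro tendsto_null_sum tendsto_norm_zero LIM_zero) (use fc in auto)
  then have ev1: "eventually (\<lambda>n. \<sigma> n < 1/4) sequentially" by (rule order_tendstoD) simp
  have "\<delta> \<longlonglongrightarrow> 0" unfolding \<delta>_def
    by (intro tendsto_null_sum tendsto_norm_zero LIM_zero) (use \<Phi>c in auto)
  then have ev2: "eventually (\<lambda>n. \<delta> n < \<epsilon>/8) sequentially" by (rule order_tendstoD) (simp add: eps)
  obtain N where N: "\<And>n. n \<ge> N \<Longrightarrow> \<sigma> n < 1/4 \<and> \<delta> n < \<epsilon>/8"
    using eventually_conj[OF ev1 ev2] unfolding eventually_sequentially by blast
  show ?thesis
  proof (rule exI[of _ N], intro allI impI)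
    fix n assume n: "n \<ge> N"
    define g where "g = f n"
    have gD: "\<forall>i<d. g i \<in> Dm" using fD by (simp add: g_def)
    have s4: "(\<Sum>i<d. norm (g i - e i)) < 1/4" using N[OF n] by (simp add: \<sigma>_def g_def)
    have d8: "(\<Sum>i<d. \<Sum>j<d. cmod (\<Phi> (g i) (g j) - \<Phi> (e i) (e j))) < \<epsilon>/8"
      using N[OF n] by (simp add: \<delta>_def g_def)
    have low: "3/4 * norm (\<Sum>i<d. sc (b i) (e i)) \<le> norm (\<Sum>i<d. sc (b i) (g i))" for b
    proof -
      have "(\<Sum>i<d. norm (g i - e i)) * norm (\<Sum>i<d. sc (b i) (e i)) \<le> 1/4 * norm (\<Sum>i<d. sc (b i) (e i))"
        using s4 by (intro mult_right_mono) auto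
      then show ?thesis using lowerb[OF on, of b g] by linarith
    qed
    have zero: "b i = 0" if b0: "(\<Sum>i<d. sc (b i) (g i)) = 0" and i: "i < d" for b i
    proof -
      have "norm (\<Sum>i<d. sc (b i) (e i)) = 0" using low[of b] b0 by simp
      then have "(\<Sum>i<d. sc (b i) (e i)) = 0" by simp
      then show ?thesis using coeff_sum[OF on i, of b] by simp
    qed
    have inj: "inj_on g {..<d}"
    proof (rule inj_onI, rule ccontr)
      fix i j assume i: "i \<in> {..<d}" and j: "j \<in> {..<d}" and eq: "g i = g j" and ne: "i \<noteq> j"
      define b where "b k = (if k = i then 1 else 0) - (if k = j then 1 else (0::complex))" for k
      have "(\<Sum>k<d. sc (b k) (g k)) = (\<Sum>k<d. (if k = i then g k else 0)) - (\<Sum>k<d. (if k = j then g k else 0))"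
        unfolding b_def scale_left_diff_distrib sum_subtractf
        by (intro arg_cong2[where f = "(-)"] sum.cong) auto
      also have "\<dots> = 0" using i j eq by (simp add: sum.delta)
      finally have "b i = 0" using zero i by blast
      then show False using ne by (simp add: b_def)
    qed
    have indep: "independent (g ` {..<d})"
    proof (rule independent_if_scalars_zero)
      show "finite (g ` {..<d})" by simp
      fix F x assume s: "(\<Sum>x\<in>g ` {..<d}. sc (F x) x) = 0" and x: "x \<in> g ` {..<d}"
      from x obtain i where i: "i < d" "x = g i" by auto
      have "(\<Sum>k<d. sc (F (g k)) (g k)) = 0" using s by (simp add: sum.reindex[OF inj])
      from zero[OF this i(1)] show "F x = 0" using i by simp
    qed
    define W where "W = span (g ` {..<d})"
    have WD: "W \<subseteq> Dm" unfolding W_def using gD Dm by (intro span_minimal) auto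
    have ex: "\<exists>!z. z \<in> W \<and> (\<forall>w\<in>W. ip w z = \<Phi> w y)" if y: "y \<in> W" for y
      unfolding W_def
    proof (rule riesz)
      show "finite (g ` {..<d})" by simp
      show "\<forall>x\<in>span (g ` {..<d}). \<forall>ya\<in>span (g ` {..<d}). \<Phi> (x + ya) y = \<Phi> x y + \<Phi> ya y"
        using WD y add1 unfolding W_def by blast
      show "\<forall>c. \<forall>x\<in>span (g ` {..<d}). \<Phi> (sc c x) y = cnj c * \<Phi> x y"
        using WD y hom1 unfolding W_def by blast
    qed
    have bd: "norm z \<le> 2 * \<epsilon> * norm y"
      if y: "y \<in> W" and z: "z \<in> W" and zp: "\<forall>w\<in>W. ip w z = \<Phi> w y" for y z
    proof -
      obtain c where yc: "y = (\<Sum>i<d. sc (c i) (g i))" using span_image_repr y W_def by blast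
      obtain b where zb: "z = (\<Sum>i<d. sc (b i) (g i))" using span_image_repr z W_def by blast
      define u where "u = (\<Sum>i<d. sc (b i) (e i))"
      define x where "x = (\<Sum>i<d. sc (c i) (e i))"
      have uV: "u \<in> span (e ` {..<d})" unfolding u_def by (intro span_sum span_scale span_base) auto
      have xV: "x \<in> span (e ` {..<d})" unfolding x_def by (intro span_sum span_scale span_base) auto
      have nu: "norm u \<le> 4/3 * norm z" using low[of b] by (simp add: u_def zb)
      have nx: "norm x \<le> 4/3 * norm y" using low[of c] by (simp add: x_def yc)
      have err: "cmod (\<Phi> z y - \<Phi> u x) \<le> \<epsilon>/8 * norm u * norm x"
      proof -
        have "cmod (\<Phi> z y - \<Phi> u x) \<le> (\<Sum>i<d. \<Sum>j<d. cmod (\<Phi> (g i) (g j) - \<Phi> (e i) (e j))) * norm u * norm x"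
          unfolding zb yc u_def x_def by (rule sesq_err[OF Dm add1 add2 hom1 hom2 eD gD on])
        also have "\<dots> \<le> \<epsilon>/8 * norm u * norm x"
          using d8 by (intro mult_right_mono) auto
        finally show ?thesis .
      qed
      have "(norm z)^2 = Re (ip z z)" by (simp add: ip_self)
      also have "\<dots> = Re (\<Phi> z y)" using zp z by simp
      also have "\<dots> \<le> cmod (\<Phi> z y)" by (rule complex_Re_le_cmod)
      also have "\<dots> \<le> cmod (\<Phi> u x) + cmod (\<Phi> z y - \<Phi> u x)" using norm_triangle_sub[of "\<Phi> z y" "\<Phi> u x"] by simp
      also have "\<dots> \<le> \<epsilon> * norm u * norm x + \<epsilon>/8 * norm u * norm x"
        using bnd uV xV err by (intro add_mono) auto
      also have "\<dots> = (9/8 * \<epsilon>) * (norm u * norm x)" by (simp add: algebra_simps)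
      also have "\<dots> \<le> (9/8 * \<epsilon>) * ((4/3 * norm z) * (4/3 * norm y))"
        using eps nu nx by (intro mult_left_mono mult_mono) auto
      also have "\<dots> = norm z * (2 * \<epsilon> * norm y)" by (simp add: algebra_simps)
      finally have "norm z * norm z \<le> norm z * (2 * \<epsilon> * norm y)" by (simp add: power2_eq_square)
      then show ?thesis
        by (cases "norm z = 0") (use eps in \<open>auto intro: mult_left_le_imp_le\<close>)
    qed
    show "inj_on (f n) {..<d} \<and> independent (f n ` {..<d}) \<and>
     (\<forall>y\<in>span (f n ` {..<d}). \<exists>!z. z \<in> span (f n ` {..<d}) \<and> (\<forall>w\<in>span (f n ` {..<d}). ip w z = \<Phi> w y)) \<and>
     (\<forall>y\<in>span (f n ` {..<d}). \<forall>z\<in>span (f n ` {..<d}).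
        (\<forall>w\<in>span (f n ` {..<d}). ip w z = \<Phi> w y) \<longrightarrow> norm z \<le> 2 * \<epsilon> * norm y)"
      using inj indep ex bd unfolding W_def g_def by blast
  qed
qed


lemma ip_bb: "bounded_bilinear ip"
proof
  fix a a' b b' :: 'a and r :: real
  show "ip (a + a') b = ip a b + ip a' b" by (rule ip_add_left)
  show "ip a (b + b') = ip a b + ip a b'" by (rule ip_add_right)
  show "ip (r *\<^sub>R a) b = r *\<^sub>R ip a b" by (simp add: scR ip_scale_left scaleR_conv_of_real)
  show "ip a (r *\<^sub>R b) = r *\<^sub>R ip a b" by (simp add: scR ip_scale_right scaleR_conv_of_real)
next
  show "\<exists>K. \<forall>x y. norm (ip x y) \<le> norm x * norm y * K"
    by (rule exI[of _ 1]) (simp add: cauchy_schwarz)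
qed

lemma ip_tendsto: "a \<longlonglongrightarrow> a0 \<Longrightarrow> b \<longlonglongrightarrow> b0 \<Longrightarrow> (\<lambda>n. ip (a n) (b n)) \<longlonglongrightarrow> ip a0 b0"
  by (rule bounded_bilinear.tendsto[OF ip_bb])

lemma reg_conv:
  assumes "(\<lambda>n. norm (g n - f) + norm (T (g n) - T f)) \<longlonglongrightarrow> 0"
  shows "g \<longlonglongrightarrow> f" "(\<lambda>n. T (g n)) \<longlonglongrightarrow> T f"
proof -
  have "(\<lambda>n. g n - f) \<longlonglongrightarrow> 0"
    by (rule Lim_null_comparison[OF _ assms]) (simp add: add_increasing2)
  then show "g \<longlonglongrightarrow> f" by (simp add: LIM_zero_iff)
  have "(\<lambda>n. T (g n) - T f) \<longlonglongrightarrow> 0"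
    by (rule Lim_null_comparison[OF _ assms]) (simp add: add_increasing)
  then show "(\<lambda>n. T (g n)) \<longlonglongrightarrow> T f" by (simp add: LIM_zero_iff)
qed

lemma apply_core:
  assumes Dm: "subspace Dm"
   and add1: "\<forall>x\<in>Dm. \<forall>y\<in>Dm. \<forall>z\<in>Dm. \<Phi> (x+y) z = \<Phi> x z + \<Phi> y z"
   and add2: "\<forall>x\<in>Dm. \<forall>y\<in>Dm. \<forall>z\<in>Dm. \<Phi> z (x+y) = \<Phi> z x + \<Phi> z y"
   and hom1: "\<forall>c. \<forall>x\<in>Dm. \<forall>y\<in>Dm. \<Phi> (sc c x) y = cnj c * \<Phi> x y"
   and hom2: "\<forall>c. \<forall>x\<in>Dm. \<forall>y\<in>Dm. \<Phi> x (sc c y) = c * \<Phi> x y"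
   and eD: "\<forall>i<d. e i \<in> Dm"
   and on: "\<forall>i<d. \<forall>j<d. ip (e i) (e j) = (if i = j then 1 else 0)"
   and bnd: "\<forall>u\<in>span (e ` {..<d}). \<forall>x\<in>span (e ` {..<d}). cmod (\<Phi> u x) \<le> \<epsilon> * norm u * norm x"
   and L: "\<forall>n. subspace (L n) \<and> L n \<subseteq> Dm"
   and fex: "\<exists>f. (\<forall>n. \<forall>j<d. f n j \<in> L n) \<and> (\<forall>j<d. (\<lambda>n. f n j) \<longlonglongrightarrow> e j) \<and>
              (\<forall>i<d. \<forall>j<d. (\<lambda>n. \<Phi> (f n i) (f n j)) \<longlonglongrightarrow> \<Phi> (e i) (e j))"
   and eps: "\<epsilon> > 0" and dpos: "d > 0"
  shows "\<exists>N>0. \<exists>W. \<forall>n\<ge>N. W n \<subseteq> L n \<and> subspace (W n) \<and> dim (W n) = d \<and>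
     (\<forall>y\<in>W n. \<exists>!z. z \<in> W n \<and> (\<forall>w\<in>W n. ip w z = \<Phi> w y)) \<and>
     (\<forall>y\<in>W n. \<forall>z\<in>W n. (\<forall>w\<in>W n. ip w z = \<Phi> w y) \<longrightarrow> norm z \<le> 2 * \<epsilon> * sqrt (real d) * norm y)"
proof -
  obtain f where fL: "\<forall>n. \<forall>j<d. f n j \<in> L n" and fc: "\<forall>j<d. (\<lambda>n. f n j) \<longlonglongrightarrow> e j"
    and \<Phi>c: "\<forall>i<d. \<forall>j<d. (\<lambda>n. \<Phi> (f n i) (f n j)) \<longlonglongrightarrow> \<Phi> (e i) (e j)" using fex by blast
  have fD: "\<forall>n. \<forall>j<d. f n j \<in> Dm" using fL L by blast
  obtain N where N: "\<forall>n\<ge>N. inj_on (f n) {..<d} \<and> independent (f n ` {..<d}) \<and>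
     (\<forall>y\<in>span (f n ` {..<d}). \<exists>!z. z \<in> span (f n ` {..<d}) \<and> (\<forall>w\<in>span (f n ` {..<d}). ip w z = \<Phi> w y)) \<and>
     (\<forall>y\<in>span (f n ` {..<d}). \<forall>z\<in>span (f n ` {..<d}).
        (\<forall>w\<in>span (f n ` {..<d}). ip w z = \<Phi> w y) \<longrightarrow> norm z \<le> 2 * \<epsilon> * norm y)"
    using core[OF Dm add1 add2 hom1 hom2 eD on bnd fD fc \<Phi>c eps] by blast
  have sq: "1 \<le> sqrt (real d)" using dpos by simp
  show ?thesis
  proof (intro exI[of _ "Suc N"] conjI exI[of _ "\<lambda>n. span (f n ` {..<d})"] allI impI)
    show "0 < Suc N" by simp
    fix n assume n: "Suc N \<le> n"
    then have Nn: "N \<le> n" by simp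
    show "span (f n ` {..<d}) \<subseteq> L n" using L fL by (intro span_minimal) auto
    show "subspace (span (f n ` {..<d}))" by simp
    show "dim (span (f n ` {..<d})) = d"
      using N Nn by (simp add: dim_eq_card_independent card_image)
    show "\<forall>y\<in>span (f n ` {..<d}). \<exists>!z. z \<in> span (f n ` {..<d}) \<and> (\<forall>w\<in>span (f n ` {..<d}). ip w z = \<Phi> w y)"
      using N Nn by blast
    show "\<forall>y\<in>span (f n ` {..<d}). \<forall>z\<in>span (f n ` {..<d}). (\<forall>w\<in>span (f n ` {..<d}). ip w z = \<Phi> w y)
       \<longrightarrow> norm z \<le> 2 * \<epsilon> * sqrt (real d) * norm y"
    proof (intro ballI impI)
      fix y z assume "y \<in> span (f n ` {..<d})" "z \<in> span (f n ` {..<d})" "\<forall>w\<in>span (f n ` {..<d}). ip w z = \<Phi> w y"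
      then have "norm z \<le> 2 * \<epsilon> * norm y" using N Nn by blast
      also have "\<dots> \<le> 2 * \<epsilon> * sqrt (real d) * norm y"
        using eps sq by (simp add: mult_le_cancel_left1 mult_right_mono)
      finally show "norm z \<le> 2 * \<epsilon> * sqrt (real d) * norm y" .
    qed
  qed
qed

lemma onb_exists:
  assumes V: "subspace V" and Vd: "dim V = d" and d: "d > 0"
  shows "\<exists>e. (\<forall>i<d. \<forall>j<d. ip (e i) (e j) = (if i = j then 1 else 0)) \<and> span (e ` {..<d}) = V"
proof -
  obtain B where B: "B \<subseteq> V" "independent B" "V \<subseteq> span B" "card B = dim V" by (rule basis_exists)
  have fin: "finite B" using B(4) Vd d card_ge_0_finite by auto
  have spB: "span B = V" using B V by (intro span_subspace) auto
  obtain vs where vs: "set vs = B" using finite_list[OF fin] by blast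
  obtain es where on: "orthonormal es" and sp: "span (set es) = V"
    using gram_schmidt[of vs] vs spB by blast
  define m where "m = length es"
  have on': "\<forall>i<m. \<forall>j<m. ip (es ! i) (es ! j) = (if i = j then 1 else 0)"
    using on by (simp add: orthonormal_def m_def)
  have dist: "distinct es"
    unfolding distinct_conv_nth
  proof (intro allI impI)
    fix i j assume i: "i < length es" and j: "j < length es" and ne: "i \<noteq> j"
    show "es ! i \<noteq> es ! j"
    proof
      assume eq: "es ! i = es ! j"
      have "ip (es ! i) (es ! j) = 0" using on' i j ne by (simp add: m_def)
      moreover have "ip (es ! i) (es ! i) = 1" using on' i by (simp add: m_def)
      ultimately show False using eq by simp
    qed
  qed
  have se: "set es = (!) es ` {..<m}" by (simp add: m_def set_nth_image)
  have injn: "inj_on ((!) es) {..<m}" using dist by (simp add: inj_on_def nth_eq_iff_index_eq m_def)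
  have indep: "independent (set es)"
  proof (rule independent_if_scalars_zero)
    show "finite (set es)" by simp
    fix F x assume s: "(\<Sum>x\<in>set es. sc (F x) x) = 0" and x: "x \<in> set es"
    from x obtain i where i: "i < m" "x = es ! i" using se by auto
    have "(\<Sum>k<m. sc (F (es ! k)) (es ! k)) = 0" using s by (simp add: se sum.reindex[OF injn])
    then show "F x = 0" using coeff_sum[OF on' i(1), of "\<lambda>k. F (es ! k)"] i by simp
  qed
  have "dim V = m" using dim_span_eq_card_independent[OF indep] sp dist
    by (simp add: distinct_card m_def)
  then have "m = d" using Vd by simp
  then show ?thesis using on' sp se by (intro exI[of _ "(!) es"]) auto
qed

end

theorem lemma3p6:
  fixes sc :: "complex \<Rightarrow> 'a::banach \<Rightarrow> 'a"
    and ip :: "'a \<Rightarrow> 'a \<Rightarrow> complex"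
    and D :: "'a set" and A :: "'a \<Rightarrow> 'a"
    and L :: "nat \<Rightarrow> 'a set"
    and lam :: real and V :: "'a set" and d :: nat and \<epsilon> :: real
  assumes H: "complex_hilbert sc ip"
    and sep: "separable_space TYPE('a)"
    and infdim: "infinite_dimensional sc"
    and sa: "selfadjoint sc ip D A"
    and V_sub: "module.subspace sc V" and V_D: "V \<subseteq> D"
    and V_dim: "vector_space.dim sc V = d" and d_pos: "d > 0"
    and eps_pos: "\<epsilon> > 0"
    and V_bound: "\<forall>x\<in>V. norm (orth_proj ip V (A x - lam *\<^sub>R x)) \<le> \<epsilon> * norm x"
  shows
    "(regular_seq sc D A L \<longrightarrow>
       (\<exists>N>0. \<exists>W. \<forall>n\<ge>N. W n \<subseteq> L n \<and> module.subspace sc (W n) \<and>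
            vector_space.dim sc (W n) = d \<and>
            (\<forall>y\<in>W n. norm (orth_proj ip (W n) (A y - lam *\<^sub>R y))
                        \<le> 2 * \<epsilon> * sqrt (real d) * norm y)))
     \<and>
     (\<forall>DS S. nonneg_op ip D A \<and> is_sqrt_op sc ip D A DS S \<and> regular_seq sc DS S L \<longrightarrow>
       (\<exists>N>0. \<exists>W. \<forall>n\<ge>N. W n \<subseteq> L n \<and> module.subspace sc (W n) \<and>
            vector_space.dim sc (W n) = d \<and>
            (\<forall>y\<in>W n. norm (form_proj ip S lam (W n) y)
                        \<le> 2 * \<epsilon> * sqrt (real d) * norm y)))"
  proof -
  interpret hil sc ip by (rule hil.intro[OF H])
  obtain e where on: "\<forall>i<d. \<forall>j<d. ip (e i) (e j) = (if i = j then 1 else 0)"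
    and spe: "module.span sc (e ` {..<d}) = V"
    using onb_exists[OF V_sub V_dim d_pos] by blast
  have eV: "\<forall>i<d. e i \<in> V"
  proof (intro allI impI)
    fix i assume "i < d"
    then have "e i \<in> e ` {..<d}" by simp
    then have "e i \<in> module.span sc (e ` {..<d})" by (rule span_base)
    then show "e i \<in> V" by (simp only: spe)
  qed
  have sa': "module.subspace sc D \<and> closure D = UNIV \<and>
     (\<forall>x\<in>D. \<forall>y\<in>D. A (x + y) = A x + A y) \<and>
     (\<forall>c. \<forall>x\<in>D. A (sc c x) = sc c (A x)) \<and>
     (\<forall>x\<in>D. \<forall>y\<in>D. ip (A x) y = ip x (A y)) \<and>
     (\<forall>y z. (\<forall>x\<in>D. ip (A x) y = ip x z) \<longrightarrow> y \<in> D)"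
    using sa unfolding selfadjoint_def .
  then have Dsub: "module.subspace sc D" and Aadd: "\<forall>x\<in>D. \<forall>y\<in>D. A (x + y) = A x + A y"
    and Ahom: "\<forall>c. \<forall>x\<in>D. A (sc c x) = sc c (A x)"
    by blast+
  define \<Phi> where "\<Phi> w y = ip w (A y) - complex_of_real lam * ip w y" for w y
  have Vfin: "\<exists>B. finite B \<and> module.span sc B = V" using spe by blast
  have projV: "orth_proj ip V x \<in> V \<and> (\<forall>u\<in>V. ip u (orth_proj ip V x) = ip u x)" for x
  proof -
    obtain B where B: "finite B" "module.span sc B = V" using Vfin by blast
    have ex: "\<exists>!p. p \<in> V \<and> (\<forall>u\<in>V. ip u p = ip u x)"
      using riesz[OF B(1), of "\<lambda>u. ip u x"] B(2) by (simp add: ip_add_left ip_scale_left)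
    have eq: "(\<lambda>p. p \<in> V \<and> (\<forall>u\<in>V. ip u (x - p) = 0)) = (\<lambda>p. p \<in> V \<and> (\<forall>u\<in>V. ip u p = ip u x))"
      by (auto simp: ip_diff_right)
    show ?thesis using theI'[OF ex] unfolding orth_proj_def eq by blast
  qed
  have bndop: "cmod (\<Phi> u x) \<le> \<epsilon> * norm u * norm x" if u: "u \<in> V" and x: "x \<in> V" for u x
  proof -
    have "\<Phi> u x = ip u (A x - lam *\<^sub>R x)" by (simp add: \<Phi>_def ip_diff_right scR ip_scale_right)
    also have "\<dots> = ip u (orth_proj ip V (A x - lam *\<^sub>R x))" using projV u by simp
    finally have "cmod (\<Phi> u x) \<le> norm u * norm (orth_proj ip V (A x - lam *\<^sub>R x))"
      using cauchy_schwarz by simp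
    also have "\<dots> \<le> norm u * (\<epsilon> * norm x)" using V_bound x by (intro mult_left_mono) auto
    finally show ?thesis by (simp add: mult.assoc mult.left_commute)
  qed
  have part1: "regular_seq sc D A L \<longrightarrow>
       (\<exists>N>0. \<exists>W. \<forall>n\<ge>N. W n \<subseteq> L n \<and> module.subspace sc (W n) \<and>
            vector_space.dim sc (W n) = d \<and>
            (\<forall>y\<in>W n. norm (orth_proj ip (W n) (A y - lam *\<^sub>R y))
                        \<le> 2 * \<epsilon> * sqrt (real d) * norm y))"
  proof
    assume reg: "regular_seq sc D A L"
    have L: "\<forall>n. module.subspace sc (L n) \<and> L n \<subseteq> D" using reg by (auto simp: regular_seq_def fd_subspace_def)
    have "\<forall>j\<in>{..<d}. \<exists>g. (\<forall>n. g n \<in> L n) \<and> (\<lambda>n. norm (g n - e j) + norm (A (g n) - A (e j))) \<longlonglongrightarrow> 0"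
    proof
      fix j assume "j \<in> {..<d}"
      then have "e j \<in> D" using eV V_D by auto
      moreover have "\<forall>f\<in>D. \<exists>g. (\<forall>n. g n \<in> L n) \<and> (\<lambda>n. norm (g n - f) + norm (A (g n) - A f)) \<longlonglongrightarrow> 0"
        using reg unfolding regular_seq_def by (rule conjunct2)
      ultimately show "\<exists>g. (\<forall>n. g n \<in> L n) \<and> (\<lambda>n. norm (g n - e j) + norm (A (g n) - A (e j))) \<longlonglongrightarrow> 0"
        by (rule bspec[rotated])
    qed
    from bchoice[OF this] obtain G where G: "\<forall>j\<in>{..<d}. (\<forall>n. G j n \<in> L n) \<and> (\<lambda>n. norm (G j n - e j) + norm (A (G j n) - A (e j))) \<longlonglongrightarrow> 0"
      by (elim exE) (rule that)
    have fex: "\<exists>f. (\<forall>n. \<forall>j<d. f n j \<in> L n) \<and> (\<forall>j<d. (\<lambda>n. f n j) \<longlonglongrightarrow> e j) \<and>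
              (\<forall>i<d. \<forall>j<d. (\<lambda>n. \<Phi> (f n i) (f n j)) \<longlonglongrightarrow> \<Phi> (e i) (e j))"
    proof (intro exI[of _ "\<lambda>n j. G j n"] conjI allI impI)
      fix n j assume "j < d" then show "G j n \<in> L n" using G by auto
    next
      fix j assume "j < d" then show "(\<lambda>n. G j n) \<longlonglongrightarrow> e j" using G reg_conv(1) by blast
    next
      fix i j assume i: "i < d" and j: "j < d"
      have c1: "(\<lambda>n. G i n) \<longlonglongrightarrow> e i" using G reg_conv(1) i by blast
      have c2: "(\<lambda>n. G j n) \<longlonglongrightarrow> e j" using G reg_conv(1) j by blast
      have c3: "(\<lambda>n. A (G j n)) \<longlonglongrightarrow> A (e j)" using G reg_conv(2) j by blast
      show "(\<lambda>n. \<Phi> (G i n) (G j n)) \<longlonglongrightarrow> \<Phi> (e i) (e j)"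
        unfolding \<Phi>_def by (intro tendsto_intros ip_tendsto c1 c2 c3)
    qed
    have "\<exists>N>0. \<exists>W. \<forall>n\<ge>N. W n \<subseteq> L n \<and> module.subspace sc (W n) \<and> vector_space.dim sc (W n) = d \<and>
     (\<forall>y\<in>W n. \<exists>!z. z \<in> W n \<and> (\<forall>w\<in>W n. ip w z = \<Phi> w y)) \<and>
     (\<forall>y\<in>W n. \<forall>z\<in>W n. (\<forall>w\<in>W n. ip w z = \<Phi> w y) \<longrightarrow> norm z \<le> 2 * \<epsilon> * sqrt (real d) * norm y)"
    proof (rule apply_core[OF Dsub _ _ _ _ _ on _ L fex eps_pos d_pos])
      show "\<forall>x\<in>D. \<forall>y\<in>D. \<forall>z\<in>D. \<Phi> (x + y) z = \<Phi> x z + \<Phi> y z"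
        by (simp add: \<Phi>_def ip_add_left algebra_simps)
      show "\<forall>x\<in>D. \<forall>y\<in>D. \<forall>z\<in>D. \<Phi> z (x + y) = \<Phi> z x + \<Phi> z y"
        using Aadd by (simp add: \<Phi>_def ip_add_right algebra_simps)
      show "\<forall>c. \<forall>x\<in>D. \<forall>y\<in>D. \<Phi> (sc c x) y = cnj c * \<Phi> x y"
        by (simp add: \<Phi>_def ip_scale_left algebra_simps)
      show "\<forall>c. \<forall>x\<in>D. \<forall>y\<in>D. \<Phi> x (sc c y) = c * \<Phi> x y"
        using Ahom by (simp add: \<Phi>_def ip_scale_right algebra_simps)
      show "\<forall>i<d. e i \<in> D" using eV V_D by blast
      show "\<forall>u\<in>module.span sc (e ` {..<d}). \<forall>x\<in>module.span sc (e ` {..<d}). cmod (\<Phi> u x) \<le> \<epsilon> * norm u * norm x"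
        using bndop spe by blast
    qed
    then obtain N W where N0: "N > 0" and NW: "\<forall>n\<ge>N. W n \<subseteq> L n \<and> module.subspace sc (W n) \<and> vector_space.dim sc (W n) = d \<and>
     (\<forall>y\<in>W n. \<exists>!z. z \<in> W n \<and> (\<forall>w\<in>W n. ip w z = \<Phi> w y)) \<and>
     (\<forall>y\<in>W n. \<forall>z\<in>W n. (\<forall>w\<in>W n. ip w z = \<Phi> w y) \<longrightarrow> norm z \<le> 2 * \<epsilon> * sqrt (real d) * norm y)"
      by blast
    show "\<exists>N>0. \<exists>W. \<forall>n\<ge>N. W n \<subseteq> L n \<and> module.subspace sc (W n) \<and>
            vector_space.dim sc (W n) = d \<and>
            (\<forall>y\<in>W n. norm (orth_proj ip (W n) (A y - lam *\<^sub>R y))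
                        \<le> 2 * \<epsilon> * sqrt (real d) * norm y)"
    proof (intro exI[of _ N] exI[of _ W] conjI N0 allI impI)
      fix n assume n: "N \<le> n"
      show "W n \<subseteq> L n" "module.subspace sc (W n)" "vector_space.dim sc (W n) = d" using NW[rule_format, OF n] by blast+
      show "\<forall>y\<in>W n. norm (orth_proj ip (W n) (A y - lam *\<^sub>R y)) \<le> 2 * \<epsilon> * sqrt (real d) * norm y"
      proof
      fix y assume y: "y \<in> W n"
      have eq: "(\<lambda>p. p \<in> W n \<and> (\<forall>u\<in>W n. ip u (A y - lam *\<^sub>R y - p) = 0)) = (\<lambda>p. p \<in> W n \<and> (\<forall>u\<in>W n. ip u p = \<Phi> u y))"
        by (auto simp: ip_diff_right \<Phi>_def scR ip_scale_right)
      have ex: "\<exists>!z. z \<in> W n \<and> (\<forall>w\<in>W n. ip w z = \<Phi> w y)" using NW[rule_format, OF n] y by blast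
      have "orth_proj ip (W n) (A y - lam *\<^sub>R y) \<in> W n \<and> (\<forall>w\<in>W n. ip w (orth_proj ip (W n) (A y - lam *\<^sub>R y)) = \<Phi> w y)"
        unfolding orth_proj_def eq by (rule theI'[OF ex])
      then show "norm (orth_proj ip (W n) (A y - lam *\<^sub>R y)) \<le> 2 * \<epsilon> * sqrt (real d) * norm y"
        using NW[rule_format, OF n] y by blast
      qed
    qed
  qed
  have part2: "\<forall>DS S. nonneg_op ip D A \<and> is_sqrt_op sc ip D A DS S \<and> regular_seq sc DS S L \<longrightarrow>
       (\<exists>N>0. \<exists>W. \<forall>n\<ge>N. W n \<subseteq> L n \<and> module.subspace sc (W n) \<and>
            vector_space.dim sc (W n) = d \<and>
            (\<forall>y\<in>W n. norm (form_proj ip S lam (W n) y)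
                        \<le> 2 * \<epsilon> * sqrt (real d) * norm y))"
  proof (intro allI impI)
    fix DS S assume asm: "nonneg_op ip D A \<and> is_sqrt_op sc ip D A DS S \<and> regular_seq sc DS S L"
    then have sq: "is_sqrt_op sc ip D A DS S" and reg: "regular_seq sc DS S L" by auto
    from sq have saS: "selfadjoint sc ip DS S" and Deq: "D = {x \<in> DS. S x \<in> DS}" and SSA: "\<forall>x\<in>D. S (S x) = A x"
      by (auto simp: is_sqrt_op_def)
    from saS have DSsub: "module.subspace sc DS" and Sadd: "\<forall>x\<in>DS. \<forall>y\<in>DS. S (x + y) = S x + S y"
      and Shom: "\<forall>c. \<forall>x\<in>DS. S (sc c x) = sc c (S x)" and Ssym: "\<forall>x\<in>DS. \<forall>y\<in>DS. ip (S x) y = ip x (S y)"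
      by (auto simp: selfadjoint_def)
    define \<Psi> where "\<Psi> w y = ip (S w) (S y) - complex_of_real lam * ip w y" for w y
    have L: "\<forall>n. module.subspace sc (L n) \<and> L n \<subseteq> DS" using reg by (auto simp: regular_seq_def fd_subspace_def)
    have eDS: "\<forall>i<d. e i \<in> DS" using eV V_D Deq by blast
    have "\<forall>j\<in>{..<d}. \<exists>g. (\<forall>n. g n \<in> L n) \<and> (\<lambda>n. norm (g n - e j) + norm (S (g n) - S (e j))) \<longlonglongrightarrow> 0"
    proof
      fix j assume "j \<in> {..<d}"
      then have "e j \<in> DS" using eDS by auto
      moreover have "\<forall>f\<in>DS. \<exists>g. (\<forall>n. g n \<in> L n) \<and> (\<lambda>n. norm (g n - f) + norm (S (g n) - S f)) \<longlonglongrightarrow> 0"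
        using reg unfolding regular_seq_def by (rule conjunct2)
      ultimately show "\<exists>g. (\<forall>n. g n \<in> L n) \<and> (\<lambda>n. norm (g n - e j) + norm (S (g n) - S (e j))) \<longlonglongrightarrow> 0"
        by (rule bspec[rotated])
    qed
    from bchoice[OF this] obtain G where G: "\<forall>j\<in>{..<d}. (\<forall>n. G j n \<in> L n) \<and> (\<lambda>n. norm (G j n - e j) + norm (S (G j n) - S (e j))) \<longlonglongrightarrow> 0"
      by (elim exE) (rule that)
    have fex: "\<exists>f. (\<forall>n. \<forall>j<d. f n j \<in> L n) \<and> (\<forall>j<d. (\<lambda>n. f n j) \<longlonglongrightarrow> e j) \<and>
              (\<forall>i<d. \<forall>j<d. (\<lambda>n. \<Psi> (f n i) (f n j)) \<longlonglongrightarrow> \<Psi> (e i) (e j))"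
    proof (intro exI[of _ "\<lambda>n j. G j n"] conjI allI impI)
      fix n j assume "j < d" then show "G j n \<in> L n" using G by auto
    next
      fix j assume "j < d" then show "(\<lambda>n. G j n) \<longlonglongrightarrow> e j" using G reg_conv(1) by blast
    next
      fix i j assume i: "i < d" and j: "j < d"
      have c1: "(\<lambda>n. G i n) \<longlonglongrightarrow> e i" using G reg_conv(1) i by blast
      have c2: "(\<lambda>n. G j n) \<longlonglongrightarrow> e j" using G reg_conv(1) j by blast
      have c3: "(\<lambda>n. S (G j n)) \<longlonglongrightarrow> S (e j)" using G reg_conv(2) j by blast
      have c4: "(\<lambda>n. S (G i n)) \<longlonglongrightarrow> S (e i)" using G reg_conv(2) i by blast
      show "(\<lambda>n. \<Psi> (G i n) (G j n)) \<longlonglongrightarrow> \<Psi> (e i) (e j)"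
        unfolding \<Psi>_def by (intro tendsto_intros ip_tendsto c1 c2 c3 c4)
    qed
    have bndf: "cmod (\<Psi> u x) \<le> \<epsilon> * norm u * norm x" if u: "u \<in> V" and x: "x \<in> V" for u x
    proof -
      have "u \<in> DS" "S x \<in> DS" "x \<in> D" using u x V_D Deq by auto
      then have "\<Psi> u x = \<Phi> u x" using Ssym SSA by (simp add: \<Psi>_def \<Phi>_def)
      then show ?thesis using bndop u x by simp
    qed
    have "\<exists>N>0. \<exists>W. \<forall>n\<ge>N. W n \<subseteq> L n \<and> module.subspace sc (W n) \<and> vector_space.dim sc (W n) = d \<and>
     (\<forall>y\<in>W n. \<exists>!z. z \<in> W n \<and> (\<forall>w\<in>W n. ip w z = \<Psi> w y)) \<and>
     (\<forall>y\<in>W n. \<forall>z\<in>W n. (\<forall>w\<in>W n. ip w z = \<Psi> w y) \<longrightarrow> norm z \<le> 2 * \<epsilon> * sqrt (real d) * norm y)"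
    proof (rule apply_core[OF DSsub _ _ _ _ eDS on _ L fex eps_pos d_pos])
      show "\<forall>x\<in>DS. \<forall>y\<in>DS. \<forall>z\<in>DS. \<Psi> (x + y) z = \<Psi> x z + \<Psi> y z"
        using Sadd by (simp add: \<Psi>_def ip_add_left algebra_simps)
      show "\<forall>x\<in>DS. \<forall>y\<in>DS. \<forall>z\<in>DS. \<Psi> z (x + y) = \<Psi> z x + \<Psi> z y"
        using Sadd by (simp add: \<Psi>_def ip_add_right algebra_simps)
      show "\<forall>c. \<forall>x\<in>DS. \<forall>y\<in>DS. \<Psi> (sc c x) y = cnj c * \<Psi> x y"
        using Shom by (simp add: \<Psi>_def ip_scale_left algebra_simps)
      show "\<forall>c. \<forall>x\<in>DS. \<forall>y\<in>DS. \<Psi> x (sc c y) = c * \<Psi> x y"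
        using Shom by (simp add: \<Psi>_def ip_scale_right algebra_simps)
      show "\<forall>u\<in>module.span sc (e ` {..<d}). \<forall>x\<in>module.span sc (e ` {..<d}). cmod (\<Psi> u x) \<le> \<epsilon> * norm u * norm x"
        using bndf spe by blast
    qed
    then obtain N W where N0: "N > 0" and NW: "\<forall>n\<ge>N. W n \<subseteq> L n \<and> module.subspace sc (W n) \<and> vector_space.dim sc (W n) = d \<and>
     (\<forall>y\<in>W n. \<exists>!z. z \<in> W n \<and> (\<forall>w\<in>W n. ip w z = \<Psi> w y)) \<and>
     (\<forall>y\<in>W n. \<forall>z\<in>W n. (\<forall>w\<in>W n. ip w z = \<Psi> w y) \<longrightarrow> norm z \<le> 2 * \<epsilon> * sqrt (real d) * norm y)"
      by blast
    show "\<exists>N>0. \<exists>W. \<forall>n\<ge>N. W n \<subseteq> L n \<and> module.subspace sc (W n) \<and>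
            vector_space.dim sc (W n) = d \<and>
            (\<forall>y\<in>W n. norm (form_proj ip S lam (W n) y)
                        \<le> 2 * \<epsilon> * sqrt (real d) * norm y)"
    proof (intro exI[of _ N] exI[of _ W] conjI N0 allI impI)
      fix n assume n: "N \<le> n"
      show "W n \<subseteq> L n" "module.subspace sc (W n)" "vector_space.dim sc (W n) = d" using NW[rule_format, OF n] by blast+
      show "\<forall>y\<in>W n. norm (form_proj ip S lam (W n) y) \<le> 2 * \<epsilon> * sqrt (real d) * norm y"
      proof
      fix y assume y: "y \<in> W n"
      have ex: "\<exists>!z. z \<in> W n \<and> (\<forall>w\<in>W n. ip w z = \<Psi> w y)" using NW[rule_format, OF n] y by blast
      have "form_proj ip S lam (W n) y \<in> W n \<and> (\<forall>w\<in>W n. ip w (form_proj ip S lam (W n) y) = \<Psi> w y)"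
        unfolding form_proj_def \<Psi>_def[symmetric] by (rule theI'[OF ex])
      then show "norm (form_proj ip S lam (W n) y) \<le> 2 * \<epsilon> * sqrt (real d) * norm y"
        using NW[rule_format, OF n] y by blast
      qed
    qed
  qed
  show ?thesis using part1 part2 by blast
qed

end
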